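(* Let $v_k$ be a joint configuration and suppose the joint configuration graph contains an optimal (minimum-cost collision-free) joint path $\pi_*(v_k,v_F)$ from $v_k$ to the joint goal $v_F$. Then for every subset $\Omega\subset I$ we have $g(\pi'_{\Omega}(v_k,v_F))\le g(\pi_*(v_k,v_F))$. Furthermore, if $\Omega_1\subset\Omega_2\subset I$, then $g(\pi'_{\Omega_1}(v_k,v_F))\le g(\pi'_{\Omega_2}(v_k,v_F))$.
   Context: A set of agents $I=\{1,\dots,n\}$; each agent $i$ moves in a finite graph $G^i=(V^i,E^i)$ with nonnegative edge costs and has goal $v_F^i$. The joint configuration graph is $G=\prod_{i\in I}G^i$, a joint configuration is $v_k=(v_k^i)_{i\in I}$ and $v_F=(v_F^i)_{i\in I}$. The cost $g$ of a joint path (of any subset of agents) is the sum of the costs of the individual agents' paths. Agents may collide according to a fixed collision relation between pairs of agents; a joint path for a set of agents is collision-free if no two agents of that set collide along it. For $\Omega\subseteq I$, $\pi'_\Omega(v_k,v_F)$ denotes the joint path for all of $I$ obtained by letting the agents in $\Omega$ follow a minimum-cost joint path from $v_k^\Omega$ to $v_F^\Omega$ that is collision-free among the agents of $\Omega$ (ignoring the agents outside $\Omega$), and letting each agent $i\notin\Omega$ follow an individually optimal (minimum-cost in $G^i$, ignoring all other agents) path from $v_k^i$ to $v_F^i$. *)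

theory Defs
  imports Complex_Main
begin

text \<open>
A joint path for a set S of agents is a nonempty list of joint configurations in which,
at every time step, every agent of S traverses an edge of its own graph
(i.e. a path in the product graph restricted to S); components of agents outside S
are irrelevant.
\<close>

definition joint_path ::
  "('i \<Rightarrow> 'v set) \<Rightarrow> ('i \<Rightarrow> ('v \<times> 'v) set) \<Rightarrow> 'i set
   \<Rightarrow> ('i \<Rightarrow> 'v) list \<Rightarrow> ('i \<Rightarrow> 'v) \<Rightarrow> ('i \<Rightarrow> 'v) \<Rightarrow> bool" where
  "joint_path V E S p a b \<longleftrightarrow> p \<noteq> [] \<and>
     (\<forall>i\<in>S. hd p i = a i \<and> last p i = b i \<and>
        (\<forall>t<length p. (p ! t) i \<in> V i) \<and>
        (\<forall>t. Suc t < length p \<longrightarrow> ((p ! t) i, (p ! Suc t) i) \<in> E i))"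

definition joint_cost ::
  "('i \<Rightarrow> 'v \<Rightarrow> 'v \<Rightarrow> real) \<Rightarrow> 'i set \<Rightarrow> ('i \<Rightarrow> 'v) list \<Rightarrow> real" where
  "joint_cost c S p = (\<Sum>i\<in>S. \<Sum>t<length p - 1. c i ((p ! t) i) ((p ! Suc t) i))"

text \<open>Collision relation: col i j (u,u') (w,w') means agent i moving along (u,u')
and agent j simultaneously moving along (w,w') collide.\<close>
definition collision_free ::
  "('i \<Rightarrow> 'i \<Rightarrow> 'v \<times> 'v \<Rightarrow> 'v \<times> 'v \<Rightarrow> bool) \<Rightarrow> 'i set \<Rightarrow> ('i \<Rightarrow> 'v) list \<Rightarrow> bool" where
  "collision_free col S p \<longleftrightarrow>
     (\<forall>i\<in>S. \<forall>j\<in>S. i \<noteq> j \<longrightarrow>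
        (\<forall>t. Suc t < length p \<longrightarrow> \<not> col i j ((p ! t) i, (p ! Suc t) i) ((p ! t) j, (p ! Suc t) j)))"

definition opt_joint_path where
  "opt_joint_path V E c col S a b p \<longleftrightarrow>
     joint_path V E S p a b \<and> collision_free col S p \<and>
     (\<forall>q. joint_path V E S q a b \<and> collision_free col S q \<longrightarrow>
          joint_cost c S p \<le> joint_cost c S q)"

definition indiv_path ::
  "('i \<Rightarrow> 'v set) \<Rightarrow> ('i \<Rightarrow> ('v \<times> 'v) set) \<Rightarrow> 'i \<Rightarrow> 'v list \<Rightarrow> 'v \<Rightarrow> 'v \<Rightarrow> bool" where
  "indiv_path V E i q a b \<longleftrightarrow> q \<noteq> [] \<and> hd q = a \<and> last q = b \<and> set q \<subseteq> V i \<and>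
     (\<forall>t. Suc t < length q \<longrightarrow> (q ! t, q ! Suc t) \<in> E i)"

definition indiv_cost :: "('i \<Rightarrow> 'v \<Rightarrow> 'v \<Rightarrow> real) \<Rightarrow> 'i \<Rightarrow> 'v list \<Rightarrow> real" where
  "indiv_cost c i q = (\<Sum>t<length q - 1. c i (q ! t) (q ! Suc t))"

definition opt_indiv_path where
  "opt_indiv_path V E c i q a b \<longleftrightarrow> indiv_path V E i q a b \<and>
     (\<forall>q'. indiv_path V E i q' a b \<longrightarrow> indiv_cost c i q \<le> indiv_cost c i q')"

text \<open>\<pi>'_\<Omega>(a,b): agents in \<Omega> follow a minimum-cost joint path p that is collision-free
among \<Omega>; each agent i \<in> I - \<Omega> follows an individually optimal path q i.\<close>
definition is_pi_prime where
  "is_pi_prime V E c col I \<Omega> a b \<pi> \<longleftrightarrow>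
     opt_joint_path V E c col \<Omega> a b (fst \<pi>) \<and>
     (\<forall>i\<in>I - \<Omega>. opt_indiv_path V E c i (snd \<pi> i) (a i) (b i))"

definition g_pi_prime ::
  "('i \<Rightarrow> 'v \<Rightarrow> 'v \<Rightarrow> real) \<Rightarrow> 'i set \<Rightarrow> 'i set \<Rightarrow> ('i \<Rightarrow> 'v) list \<times> ('i \<Rightarrow> 'v list) \<Rightarrow> real" where
  "g_pi_prime c I \<Omega> \<pi> = joint_cost c \<Omega> (fst \<pi>) + (\<Sum>i\<in>I - \<Omega>. indiv_cost c i (snd \<pi> i))"

end

theory Submission
  imports Defs
begin

lemma restrict_jp:
  assumes "opt_joint_path V E c col S2 a b p2" "S1 \<subseteq> S2"
  shows "joint_path V E S1 p2 a b \<and> collision_free col S1 p2"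
  using assms unfolding opt_joint_path_def joint_path_def collision_free_def by blast

lemma proj_indiv:
  assumes "opt_joint_path V E c col S2 a b p2" "i \<in> S2"
  shows "indiv_path V E i (map (\<lambda>x. x i) p2) (a i) (b i)"
proof -
  have j: "p2 \<noteq> []" "hd p2 i = a i" "last p2 i = b i" "\<forall>t<length p2. (p2 ! t) i \<in> V i"
     "\<forall>t. Suc t < length p2 \<longrightarrow> ((p2 ! t) i, (p2 ! Suc t) i) \<in> E i"
    using assms unfolding opt_joint_path_def joint_path_def by auto
  have "set (map (\<lambda>x. x i) p2) \<subseteq> V i"
  proof
    fix v assume "v \<in> set (map (\<lambda>x. x i) p2)"
    then obtain t where "t < length p2" "v = (p2 ! t) i" by (auto simp: in_set_conv_nth)
    then show "v \<in> V i" using j(4) by auto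
  qed
  then show ?thesis unfolding indiv_path_def using j by (simp add: hd_map last_map)
qed

lemma proj_cost:
  "indiv_cost c i (map (\<lambda>x. x i) p) = (\<Sum>t<length p - 1. c i ((p ! t) i) ((p ! Suc t) i))"
  unfolding indiv_cost_def by (intro sum.cong) auto

lemma mono_main:
  assumes fin: "finite I" and sub: "\<Omega>1 \<subseteq> \<Omega>2" "\<Omega>2 \<subseteq> I"
    and p1: "is_pi_prime V E c col I \<Omega>1 vk vF \<pi>1"
    and p2: "is_pi_prime V E c col I \<Omega>2 vk vF \<pi>2"
  shows "g_pi_prime c I \<Omega>1 \<pi>1 \<le> g_pi_prime c I \<Omega>2 \<pi>2"
proof -
  let ?J = "\<lambda>i. (\<Sum>t<length (fst \<pi>2) - 1. c i ((fst \<pi>2 ! t) i) ((fst \<pi>2 ! Suc t) i))"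
  have o1: "opt_joint_path V E c col \<Omega>1 vk vF (fst \<pi>1)"
    and o2: "opt_joint_path V E c col \<Omega>2 vk vF (fst \<pi>2)"
    using p1 p2 unfolding is_pi_prime_def by auto
  have A: "joint_cost c \<Omega>1 (fst \<pi>1) \<le> joint_cost c \<Omega>1 (fst \<pi>2)"
    using o1 restrict_jp[OF o2 sub(1)] unfolding opt_joint_path_def by blast
  have B: "indiv_cost c i (snd \<pi>1 i) \<le> ?J i" if "i \<in> \<Omega>2 - \<Omega>1" for i
  proof -
    have "opt_indiv_path V E c i (snd \<pi>1 i) (vk i) (vF i)"
      using p1 that sub unfolding is_pi_prime_def by auto
    then show ?thesis using proj_indiv[OF o2, of i] that proj_cost[of c i "fst \<pi>2"]
      unfolding opt_indiv_path_def by auto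
  qed
  have C: "indiv_cost c i (snd \<pi>1 i) \<le> indiv_cost c i (snd \<pi>2 i)" if "i \<in> I - \<Omega>2" for i
    using p1 p2 that sub unfolding is_pi_prime_def opt_indiv_path_def by blast
  have f1: "finite \<Omega>1" "finite \<Omega>2" using fin sub finite_subset by blast+
  have s1: "(\<Sum>i\<in>I - \<Omega>1. indiv_cost c i (snd \<pi>1 i)) =
     (\<Sum>i\<in>\<Omega>2 - \<Omega>1. indiv_cost c i (snd \<pi>1 i)) + (\<Sum>i\<in>I - \<Omega>2. indiv_cost c i (snd \<pi>1 i))"
  proof -
    have "I - \<Omega>1 = (\<Omega>2 - \<Omega>1) \<union> (I - \<Omega>2)" using sub by auto
    moreover have "finite (\<Omega>2 - \<Omega>1)" "finite (I - \<Omega>2)" "(\<Omega>2 - \<Omega>1) \<inter> (I - \<Omega>2) = {}" using fin f1 by auto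
    ultimately show ?thesis by (simp add: sum.union_disjoint)
  qed
  have s2: "joint_cost c \<Omega>2 (fst \<pi>2) = joint_cost c \<Omega>1 (fst \<pi>2) + (\<Sum>i\<in>\<Omega>2 - \<Omega>1. ?J i)"
    unfolding joint_cost_def by (subst sum.subset_diff[OF sub(1) f1(2)]) (rule add.commute)
  have "(\<Sum>i\<in>\<Omega>2 - \<Omega>1. indiv_cost c i (snd \<pi>1 i)) \<le> (\<Sum>i\<in>\<Omega>2 - \<Omega>1. ?J i)"
    using B by (rule sum_mono)
  moreover have "(\<Sum>i\<in>I - \<Omega>2. indiv_cost c i (snd \<pi>1 i)) \<le> (\<Sum>i\<in>I - \<Omega>2. indiv_cost c i (snd \<pi>2 i))"
    using C by (rule sum_mono)
  ultimately show ?thesis unfolding g_pi_prime_def using s1 s2 A by linarith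
qed

theorem lemma8:
  fixes I :: "'i set" and V :: "'i \<Rightarrow> 'v set" and E :: "'i \<Rightarrow> ('v \<times> 'v) set"
    and c :: "'i \<Rightarrow> 'v \<Rightarrow> 'v \<Rightarrow> real"
    and col :: "'i \<Rightarrow> 'i \<Rightarrow> 'v \<times> 'v \<Rightarrow> 'v \<times> 'v \<Rightarrow> bool"
    and vk vF :: "'i \<Rightarrow> 'v" and pstar :: "('i \<Rightarrow> 'v) list"
  assumes "finite I"
    and "\<And>i. i \<in> I \<Longrightarrow> finite (V i)"
    and "\<And>i. i \<in> I \<Longrightarrow> E i \<subseteq> V i \<times> V i"
    and "\<And>i u w. i \<in> I \<Longrightarrow> (u, w) \<in> E i \<Longrightarrow> 0 \<le> c i u w"
    and "\<And>i. i \<in> I \<Longrightarrow> vk i \<in> V i \<and> vF i \<in> V i"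
    and "opt_joint_path V E c col I vk vF pstar"
  shows "(\<forall>\<Omega> \<pi>. \<Omega> \<subseteq> I \<and> is_pi_prime V E c col I \<Omega> vk vF \<pi> \<longrightarrow>
            g_pi_prime c I \<Omega> \<pi> \<le> joint_cost c I pstar)
       \<and> (\<forall>\<Omega>1 \<Omega>2 \<pi>1 \<pi>2. \<Omega>1 \<subseteq> \<Omega>2 \<and> \<Omega>2 \<subseteq> I
            \<and> is_pi_prime V E c col I \<Omega>1 vk vF \<pi>1 \<and> is_pi_prime V E c col I \<Omega>2 vk vF \<pi>2 \<longrightarrow>
            g_pi_prime c I \<Omega>1 \<pi>1 \<le> g_pi_prime c I \<Omega>2 \<pi>2)"
proof (intro conjI allI impI)
  fix \<Omega> \<pi> assume h: "\<Omega> \<subseteq> I \<and> is_pi_prime V E c col I \<Omega> vk vF \<pi>"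
  let ?s = "(pstar, undefined) :: ('i \<Rightarrow> 'v) list \<times> ('i \<Rightarrow> 'v list)"
  have ps: "is_pi_prime V E c col I I vk vF ?s"
    using assms(6) unfolding is_pi_prime_def by simp
  have "g_pi_prime c I I ?s = joint_cost c I pstar" unfolding g_pi_prime_def by simp
  then show "g_pi_prime c I \<Omega> \<pi> \<le> joint_cost c I pstar"
    using mono_main[OF assms(1) _ subset_refl _ ps] h by metis
next
  fix \<Omega>1 \<Omega>2 \<pi>1 \<pi>2
  assume "\<Omega>1 \<subseteq> \<Omega>2 \<and> \<Omega>2 \<subseteq> I
            \<and> is_pi_prime V E c col I \<Omega>1 vk vF \<pi>1 \<and> is_pi_prime V E c col I \<Omega>2 vk vF \<pi>2"
  then show "g_pi_prime c I \<Omega>1 \<pi>1 \<le> g_pi_prime c I \<Omega>2 \<pi>2"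
    using mono_main[OF assms(1)] by blast
qed

end
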